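(* Let $\Gamma$ be a MaxSAT instance encoded with blocking variables $b_1,\dots,b_m$. If there is a derivation in the cost-SR calculus from $\Gamma$ that contains $k$ unit clauses $b_{i_1},\dots,b_{i_k}$ for $k$ distinct indices $i_1,\dots,i_k$, then $\mathrm{cost}(\Gamma)\ge k$. If moreover the derivation also contains all unit clauses $\lnot b_j$ for $j\notin\{i_1,\dots,i_k\}$, then $\mathrm{cost}(\Gamma)=k$.
   Context: Literals are variables $x$ or negations $\lnot x$; a clause is a disjunction of literals; a CNF is identified with the multiset of its clauses; $\mathrm{Var}(\Gamma)$ is its set of variables. A substitution $\sigma$ maps each variable to $0$, $1$ or a literal, extended by $\sigma(0)=0,\sigma(1)=1,\sigma(\lnot x)=\lnot\sigma(x)$; composition is $(\sigma\circ\tau)(x)=\sigma(\tau(x))$. A (partial) assignment is a substitution with $\sigma(x)\in\{0,1,x\}$ for all $x$; its domain is $\sigma^{-1}(\{0,1\})$; it is total if it assigns all variables a Boolean value. $C{\upharpoonright}_\sigma$ is the clause obtained by applying $\sigma$ to every literal and simplifying ($D\lor 0=D$, $D\lor 1=1$, repeated literals merged); $\sigma$ satisfies $C$ if $C{\upharpoonright}_\sigma=1$ or is a tautology. $\Gamma{\upharpoonright}_\sigma$ is the multiset of $C{\upharpoonright}_\sigma$ for $C\in\Gamma$ with $C{\upharpoonright}_\sigma\ne 1$. For a clause $C$, $\lnot C$ denotes the partial assignment setting all literals of $C$ to $0$; $\tau\supseteq\rho$ means $\tau$ extends $\rho$. Unit propagation repeatedly picks a unit clause $\ell$, deletes clauses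 containing $\ell$ and removes $\lnot\ell$ from the others, until no unit clause remains. $\Gamma\vdash_1 C$ means unit propagation on $\Gamma{\upharpoonright}_{\lnot C}$ produces the empty clause; $\Gamma\vdash_1\Delta$ means $\Gamma\vdash_1 D$ for all $D\in\Delta$. A MaxSAT instance encoded with blocking variables is a CNF (of hard clauses) $\Gamma=H\cup\{C_1\lor b_1,\dots,C_m\lor b_m\}$ where $b_1,\dots,b_m$ are distinct variables (blocking variables) not occurring in $H,C_1,\dots,C_m$ (the soft clauses $\lnot b_1,\dots,\lnot b_m$ are implicit). For a total assignment $\alpha$, $\mathrm{cost}(\alpha)=\sum_{i=1}^m\alpha(b_i)$, and $\mathrm{cost}(\Gamma)=\min\{\mathrm{cost}(\alpha):\alpha\text{ total},\ \alpha\models\Gamma\}$ (same definition for any CNF containing the designated blocking variables). A clause $C$ is cost-SR w.r.t. $\Gamma$ if there is a substitution $\sigma$ with (1) $\Gamma{\upharpoonright}_{\lnot C}\vdash_1(\Gamma\cup\{C\}){\upharpoonright}_\sigma$ and (2) $\mathrm{cost}(\tau\circ\sigma)\le\mathrm{cost}(\tau)$ for every total assignment $\tau\supseteq\lnot C$. A derivation in the cost-SR calculus from $\Gamma$ is a sequence of clauses $D_1,\dots,D_t$ where each $D_i$ is in $\Gamma$, or follows from earlier clauses of $\Gamma\cup\{D_1,\dots,D_{i-1}\}$ by weakening (from $A$ infer any $B\supseteq A$) or resolution (from $A\lor x$ and $B\lor\lnot x$ infer $A\lor B$), or is cost-SR w.r.t. $\Gamma\cup\{D_1,\dots,D_{i-1}\}$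 with $\mathrm{Var}(D_i)\subseteq\mathrm{Var}(\Gamma)$ (the witnessing substitution is attached). *)

theory Defs
  imports Main "HOL-Library.Extended_Nat"
begin

datatype 'v lit = Pos 'v | Neg 'v

fun var :: "'v lit \<Rightarrow> 'v" where
  "var (Pos x) = x" | "var (Neg x) = x"

fun neglit :: "'v lit \<Rightarrow> 'v lit" where
  "neglit (Pos x) = Neg x" | "neglit (Neg x) = Pos x"

type_synonym 'v clause = "'v lit set"
type_synonym 'v cnf = "'v clause set"

definition vars_cl :: "'v clause \<Rightarrow> 'v set" where
  "vars_cl c = var ` c"

definition vars :: "'v cnf \<Rightarrow> 'v set" where
  "vars F = (\<Union>c\<in>F. vars_cl c)"

definition tautology :: "'v clause \<Rightarrow> bool" where
  "tautology c \<longleftrightarrow> (\<exists>x. Pos x \<in> c \<and> Neg x \<in> c)"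

text \<open>Value of a substitution at a variable: a constant 0/1 or a literal.\<close>
datatype 'v sv = SC bool | SL "'v lit"

type_synonym 'v subst = "'v \<Rightarrow> 'v sv"

fun negsv :: "'v sv \<Rightarrow> 'v sv" where
  "negsv (SC b) = SC (\<not> b)" | "negsv (SL l) = SL (neglit l)"

fun applit :: "'v subst \<Rightarrow> 'v lit \<Rightarrow> 'v sv" where
  "applit \<sigma> (Pos x) = \<sigma> x" | "applit \<sigma> (Neg x) = negsv (\<sigma> x)"

text \<open>Restriction of a clause: None encodes the constant 1 (clause satisfied).\<close>
definition restrict :: "'v subst \<Rightarrow> 'v clause \<Rightarrow> 'v clause option" where
  "restrict \<sigma> c = (if \<exists>l\<in>c. applit \<sigma> l = SC True then None
                    else Some {l'. \<exists>l\<in>c. applit \<sigma> l = SL l'})"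

definition restrict_cnf :: "'v subst \<Rightarrow> 'v cnf \<Rightarrow> 'v cnf" where
  "restrict_cnf \<sigma> F = {c'. \<exists>c\<in>F. restrict \<sigma> c = Some c'}"

definition negC :: "'v clause \<Rightarrow> 'v subst" where
  "negC c x = (if Pos x \<in> c then SC False else if Neg x \<in> c then SC True else SL (Pos x))"

definition propagate :: "'v lit \<Rightarrow> 'v cnf \<Rightarrow> 'v cnf" where
  "propagate l F = {c - {neglit l} | c. c \<in> F \<and> l \<notin> c}"

inductive up_refutes :: "'v cnf \<Rightarrow> bool" where
  empty: "{} \<in> F \<Longrightarrow> up_refutes F"
| unit: "{l} \<in> F \<Longrightarrow> up_refutes (propagate l F) \<Longrightarrow> up_refutes F"

definition rup :: "'v cnf \<Rightarrow> 'v clause \<Rightarrow> bool" where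
  "rup F c \<longleftrightarrow> tautology c \<or> up_refutes (restrict_cnf (negC c) F)"

fun lit_val :: "('v \<Rightarrow> bool) \<Rightarrow> 'v lit \<Rightarrow> bool" where
  "lit_val \<tau> (Pos x) = \<tau> x" | "lit_val \<tau> (Neg x) = (\<not> \<tau> x)"

definition models :: "('v \<Rightarrow> bool) \<Rightarrow> 'v cnf \<Rightarrow> bool" where
  "models \<alpha> F \<longleftrightarrow> (\<forall>c\<in>F. \<exists>l\<in>c. lit_val \<alpha> l)"

fun sv_val :: "('v \<Rightarrow> bool) \<Rightarrow> 'v sv \<Rightarrow> bool" where
  "sv_val \<tau> (SC b) = b" | "sv_val \<tau> (SL l) = lit_val \<tau> l"

definition comp_assign :: "('v \<Rightarrow> bool) \<Rightarrow> 'v subst \<Rightarrow> ('v \<Rightarrow> bool)" where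
  "comp_assign \<tau> \<sigma> x = sv_val \<tau> (\<sigma> x)"

text \<open>Cost w.r.t. blocking variables \<open>b 0, ..., b (m-1)\<close>.\<close>
definition cost_assign :: "(nat \<Rightarrow> 'v) \<Rightarrow> nat \<Rightarrow> ('v \<Rightarrow> bool) \<Rightarrow> nat" where
  "cost_assign b m \<alpha> = (\<Sum>i<m. if \<alpha> (b i) then 1 else 0)"

text \<open>Minimum cost of a satisfying total assignment; \<open>\<infinity>\<close> if unsatisfiable.\<close>
definition cost_cnf :: "(nat \<Rightarrow> 'v) \<Rightarrow> nat \<Rightarrow> 'v cnf \<Rightarrow> enat" where
  "cost_cnf b m F = (INF \<alpha>\<in>{\<alpha>. models \<alpha> F}. enat (cost_assign b m \<alpha>))"

definition falsifies :: "('v \<Rightarrow> bool) \<Rightarrow> 'v clause \<Rightarrow> bool" where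
  "falsifies \<tau> c \<longleftrightarrow> (\<forall>l\<in>c. \<not> lit_val \<tau> l)"

definition cost_SR_wit :: "(nat \<Rightarrow> 'v) \<Rightarrow> nat \<Rightarrow> 'v cnf \<Rightarrow> 'v clause \<Rightarrow> 'v subst \<Rightarrow> bool" where
  "cost_SR_wit b m F c \<sigma> \<longleftrightarrow>
     (\<forall>d\<in>restrict_cnf \<sigma> (F \<union> {c}). rup (restrict_cnf (negC c) F) d) \<and>
     (\<forall>\<tau>. falsifies \<tau> c \<longrightarrow> cost_assign b m (comp_assign \<tau> \<sigma>) \<le> cost_assign b m \<tau>)"

definition deriv_step :: "(nat \<Rightarrow> 'v) \<Rightarrow> nat \<Rightarrow> 'v cnf \<Rightarrow> 'v cnf \<Rightarrow> 'v clause \<Rightarrow> bool" where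
  "deriv_step b m G E d \<longleftrightarrow> finite d \<and>
     (d \<in> G
      \<or> (\<exists>a\<in>G \<union> E. a \<subseteq> d)
      \<or> (\<exists>a a' x. insert (Pos x) a \<in> G \<union> E \<and> insert (Neg x) a' \<in> G \<union> E \<and> d = a \<union> a')
      \<or> ((\<exists>\<sigma>. cost_SR_wit b m (G \<union> E) d \<sigma>) \<and> vars_cl d \<subseteq> vars G))"

definition cost_SR_derivation :: "(nat \<Rightarrow> 'v) \<Rightarrow> nat \<Rightarrow> 'v cnf \<Rightarrow> 'v clause list \<Rightarrow> bool" where
  "cost_SR_derivation b m G ds \<longleftrightarrow>
     (\<forall>i<length ds. deriv_step b m G (set (take i ds)) (ds ! i))"

definition maxsat_cnf :: "'v cnf \<Rightarrow> (nat \<Rightarrow> 'v clause) \<Rightarrow> (nat \<Rightarrow> 'v) \<Rightarrow> nat \<Rightarrow> 'v cnf" where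
  "maxsat_cnf H C b m = H \<union> {insert (Pos (b i)) (C i) | i. i < m}"

definition maxsat_instance :: "'v cnf \<Rightarrow> (nat \<Rightarrow> 'v clause) \<Rightarrow> (nat \<Rightarrow> 'v) \<Rightarrow> nat \<Rightarrow> bool" where
  "maxsat_instance H C b m \<longleftrightarrow>
     finite H \<and> (\<forall>c\<in>H. finite c) \<and> (\<forall>i<m. finite (C i)) \<and>
     inj_on b {..<m} \<and>
     (\<forall>i<m. b i \<notin> vars H \<and> (\<forall>j<m. b i \<notin> vars_cl (C j)))"

end

theory Submission
  imports Defs
begin

lemma lit_comp: "lit_val (comp_assign \<tau> \<rho>) l = sv_val \<tau> (applit \<rho> l)"
proof (cases l)
  case (Pos x) then show ?thesis by (simp add: comp_assign_def)
next
  case (Neg x) then show ?thesis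
    by (cases "\<rho> x"; simp add: comp_assign_def; case_tac x2; simp)
qed

lemma models_restrict:
  assumes "models (comp_assign \<tau> \<rho>) F" shows "models \<tau> (restrict_cnf \<rho> F)"
  unfolding models_def restrict_cnf_def
proof (clarify)
  fix c' c assume cF: "c \<in> F" and r: "restrict \<rho> c = Some c'"
  from assms cF obtain l where l: "l \<in> c" "lit_val (comp_assign \<tau> \<rho>) l"
    unfolding models_def by blast
  from r have nt: "\<forall>l\<in>c. applit \<rho> l \<noteq> SC True" and c': "c' = {l'. \<exists>l\<in>c. applit \<rho> l = SL l'}"
    unfolding restrict_def by (auto split: if_splits)
  show "\<exists>l\<in>c'. lit_val \<tau> l"
  proof (cases "applit \<rho> l")
    case (SC v) then show ?thesis using l nt lit_comp[of \<tau> \<rho> l] by auto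
  next
    case (SL l') then show ?thesis using l c' lit_comp[of \<tau> \<rho> l] by auto
  qed
qed

lemma models_unrestrict:
  assumes "models \<tau> (restrict_cnf \<rho> F)" shows "models (comp_assign \<tau> \<rho>) F"
  unfolding models_def
proof
  fix c assume cF: "c \<in> F"
  show "\<exists>l\<in>c. lit_val (comp_assign \<tau> \<rho>) l"
  proof (cases "\<exists>l\<in>c. applit \<rho> l = SC True")
    case True
    then obtain l where "l \<in> c" "applit \<rho> l = SC True" by blast
    then show ?thesis using lit_comp[of \<tau> \<rho> l] by auto
  next
    case False
    then have "{l'. \<exists>l\<in>c. applit \<rho> l = SL l'} \<in> restrict_cnf \<rho> F"
      using cF unfolding restrict_cnf_def restrict_def by auto
    then obtain l' where "l' \<in> {l'. \<exists>l\<in>c. applit \<rho> l = SL l'}" "lit_val \<tau> l'"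
      using assms unfolding models_def by blast
    then obtain l where "l \<in> c" "applit \<rho> l = SL l'" by blast
    then show ?thesis using lit_comp[of \<tau> \<rho> l] \<open>lit_val \<tau> l'\<close> by auto
  qed
qed

lemma comp_negC:
  assumes f: "falsifies \<tau> c" shows "comp_assign \<tau> (negC c) = \<tau>"
proof
  fix x
  have p: "Pos x \<in> c \<Longrightarrow> \<not> \<tau> x" using f unfolding falsifies_def by force
  have n: "Neg x \<in> c \<Longrightarrow> \<tau> x" using f unfolding falsifies_def by force
  show "comp_assign \<tau> (negC c) x = \<tau> x"
    unfolding comp_assign_def negC_def using p n by auto
qed

lemma up_sound: "up_refutes F \<Longrightarrow> models \<tau> F \<Longrightarrow> False"
proof (induction rule: up_refutes.induct)
  case (empty F) then show ?case unfolding models_def by blast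
next
  case (unit l F)
  have "lit_val \<tau> l" using unit.hyps(1) unit.prems unfolding models_def by blast
  then have nl: "\<not> lit_val \<tau> (neglit l)" by (cases l) auto
  have "models \<tau> (propagate l F)"
    unfolding models_def propagate_def
  proof clarify
    fix c assume "c \<in> F" "l \<notin> c"
    then obtain l' where "l' \<in> c" "lit_val \<tau> l'" using unit.prems unfolding models_def by blast
    then show "\<exists>l\<in>c - {neglit l}. lit_val \<tau> l" using nl by (intro bexI[of _ l']) auto
  qed
  then show ?case using unit.IH by blast
qed

lemma taut_sat: "tautology d \<Longrightarrow> \<exists>l\<in>d. lit_val \<tau> l"
proof -
  assume "tautology d"
  then obtain x where "Pos x \<in> d" "Neg x \<in> d" unfolding tautology_def by blast
  then show ?thesis by (cases "\<tau> x") force+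
qed

lemma rup_sound:
  assumes "rup F d" "models \<tau> F" shows "\<exists>l\<in>d. lit_val \<tau> l"
proof (rule ccontr)
  assume n: "\<not> (\<exists>l\<in>d. lit_val \<tau> l)"
  then have f: "falsifies \<tau> d" unfolding falsifies_def by blast
  from n have "\<not> tautology d" using taut_sat by blast
  then have "up_refutes (restrict_cnf (negC d) F)" using assms(1) unfolding rup_def by blast
  moreover have "models \<tau> (restrict_cnf (negC d) F)"
    using models_restrict[of \<tau> "negC d" F] comp_negC[OF f] assms(2) by simp
  ultimately show False using up_sound by blast
qed

lemma models_Un: "models a (F \<union> G) \<longleftrightarrow> models a F \<and> models a G"
  unfolding models_def by blast

lemma step_preserve:
  assumes st: "deriv_step b m G E d" and mb: "models \<beta> (G \<union> E)"
  shows "\<exists>\<beta>'. models \<beta>' (G \<union> E \<union> {d}) \<and> cost_assign b m \<beta>' \<le> cost_assign b m \<beta>"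
proof (cases "\<exists>l\<in>d. lit_val \<beta> l")
  case True
  have "models \<beta> (G \<union> E \<union> {d})" using mb True unfolding models_def by blast
  then show ?thesis by blast
next
  case False
  then have f: "falsifies \<beta> d" unfolding falsifies_def by blast
  from st have "d \<in> G
      \<or> (\<exists>a\<in>G \<union> E. a \<subseteq> d)
      \<or> (\<exists>a a' x. insert (Pos x) a \<in> G \<union> E \<and> insert (Neg x) a' \<in> G \<union> E \<and> d = a \<union> a')
      \<or> ((\<exists>\<sigma>. cost_SR_wit b m (G \<union> E) d \<sigma>))" unfolding deriv_step_def by blast
  then show ?thesis
  proof (elim disjE exE conjE bexE)
    assume "d \<in> G" then have False using mb False unfolding models_def by blast
    then show ?thesis ..
  next
    fix a assume "a \<in> G \<union> E" "a \<subseteq> d"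
    then have False using mb False unfolding models_def by blast
    then show ?thesis ..
  next
    fix a a' x assume h: "insert (Pos x) a \<in> G \<union> E" "insert (Neg x) a' \<in> G \<union> E" "d = a \<union> a'"
    then have "\<exists>l\<in>insert (Pos x) a. lit_val \<beta> l" "\<exists>l\<in>insert (Neg x) a'. lit_val \<beta> l"
      using mb unfolding models_def by blast+
    then have "\<exists>l\<in>d. lit_val \<beta> l" using h(3) by (cases "\<beta> x") auto
    then have False using False by blast
    then show ?thesis ..
  next
    fix \<sigma> assume w: "cost_SR_wit b m (G \<union> E) d \<sigma>"
    have mr: "models \<beta> (restrict_cnf (negC d) (G \<union> E))"
      using models_restrict[of \<beta> "negC d" "G \<union> E"] comp_negC[OF f] mb by simp
    have "models \<beta> (restrict_cnf \<sigma> (G \<union> E \<union> {d}))"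
      unfolding models_def
    proof
      fix d' assume "d' \<in> restrict_cnf \<sigma> (G \<union> E \<union> {d})"
      then have "rup (restrict_cnf (negC d) (G \<union> E)) d'" using w unfolding cost_SR_wit_def by blast
      then show "\<exists>l\<in>d'. lit_val \<beta> l" using rup_sound mr by blast
    qed
    then have "models (comp_assign \<beta> \<sigma>) (G \<union> E \<union> {d})" by (rule models_unrestrict)
    moreover have "cost_assign b m (comp_assign \<beta> \<sigma>) \<le> cost_assign b m \<beta>"
      using w f unfolding cost_SR_wit_def by blast
    ultimately show ?thesis by (intro exI[of _ "comp_assign \<beta> \<sigma>"]) simp
  qed
qed

lemma prefix_preserve:
  assumes der: "cost_SR_derivation b m G ds" and ma: "models \<alpha> G"
  shows "n \<le> length ds \<Longrightarrow> \<exists>\<beta>. models \<beta> (G \<union> set (take n ds)) \<and> cost_assign b m \<beta> \<le> cost_assign b m \<alpha>"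
proof (induction n)
  case 0 then show ?case using ma by auto
next
  case (Suc n)
  then obtain \<beta> where b: "models \<beta> (G \<union> set (take n ds))" "cost_assign b m \<beta> \<le> cost_assign b m \<alpha>" by auto
  have "deriv_step b m G (set (take n ds)) (ds ! n)" using der Suc.prems unfolding cost_SR_derivation_def by auto
  from step_preserve[OF this b(1)] obtain \<beta>' where
    "models \<beta>' (G \<union> set (take n ds) \<union> {ds ! n})" "cost_assign b m \<beta>' \<le> cost_assign b m \<beta>" by blast
  moreover have "set (take (Suc n) ds) = set (take n ds) \<union> {ds ! n}"
    using Suc.prems by (simp add: take_Suc_conv_app_nth)
  ultimately have "models \<beta>' (G \<union> set (take (Suc n) ds))"
    by (simp add: Un_assoc)
  moreover have "cost_assign b m \<beta>' \<le> cost_assign b m \<alpha>"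
    using b(2) \<open>cost_assign b m \<beta>' \<le> cost_assign b m \<beta>\<close> by linarith
  ultimately show ?case by blast
qed

theorem theorem4p2:
  fixes H :: "'v cnf" and C :: "nat \<Rightarrow> 'v clause" and b :: "nat \<Rightarrow> 'v"
    and m :: nat and ds :: "'v clause list" and I :: "nat set"
  assumes inst: "maxsat_instance H C b m"
    and der: "cost_SR_derivation b m (maxsat_cnf H C b m) ds"
    and I: "I \<subseteq> {..<m}"
    and units: "\<forall>i\<in>I. {Pos (b i)} \<in> set ds"
  shows "enat (card I) \<le> cost_cnf b m (maxsat_cnf H C b m) \<and>
         ((\<forall>j<m. j \<notin> I \<longrightarrow> {Neg (b j)} \<in> set ds)
          \<longrightarrow> (\<exists>\<alpha>. models \<alpha> (maxsat_cnf H C b m))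
          \<longrightarrow> cost_cnf b m (maxsat_cnf H C b m) = enat (card I))"
proof -
  let ?G = "maxsat_cnf H C b m"
  have fin: "finite I" using I finite_subset by blast
  have full: "\<exists>\<beta>. models \<beta> (?G \<union> set ds) \<and> cost_assign b m \<beta> \<le> cost_assign b m \<alpha>"
    if "models \<alpha> ?G" for \<alpha>
    using prefix_preserve[OF der that, of "length ds"] by simp
  have bI: "\<beta> (b i)" if "models \<beta> (?G \<union> set ds)" "i \<in> I" for \<beta> i
  proof -
    have "{Pos (b i)} \<in> ?G \<union> set ds" using that(2) units by blast
    then have "\<exists>l\<in>{Pos (b i)}. lit_val \<beta> l" using that(1) unfolding models_def by blast
    then show ?thesis by simp
  qed
  have lb: "card I \<le> cost_assign b m \<beta>" if "models \<beta> (?G \<union> set ds)" for \<beta>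
  proof -
    have "card I = (\<Sum>i\<in>I. (if \<beta> (b i) then 1 else 0::nat))" using bI[OF that] by simp
    also have "\<dots> \<le> (\<Sum>i<m. (if \<beta> (b i) then 1 else 0::nat))"
      by (rule sum_mono2) (use I in auto)
    finally show ?thesis unfolding cost_assign_def .
  qed
  have part1: "enat (card I) \<le> cost_cnf b m ?G"
    unfolding cost_cnf_def
  proof (rule INF_greatest)
    fix \<alpha> assume "\<alpha> \<in> {\<alpha>. models \<alpha> ?G}"
    then obtain \<beta> where "models \<beta> (?G \<union> set ds)" "cost_assign b m \<beta> \<le> cost_assign b m \<alpha>"
      using full by blast
    then have "card I \<le> cost_assign b m \<alpha>" using lb[of \<beta>] by linarith
    then show "enat (card I) \<le> enat (cost_assign b m \<alpha>)" by simp
  qed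
  have part2: "cost_cnf b m ?G = enat (card I)"
    if negs: "\<forall>j<m. j \<notin> I \<longrightarrow> {Neg (b j)} \<in> set ds" and ex: "\<exists>\<alpha>. models \<alpha> ?G"
  proof -
    obtain \<alpha> where a: "models \<alpha> ?G" using ex by blast
    then obtain \<beta> where bm: "models \<beta> (?G \<union> set ds)" using full by blast
    have nb: "\<not> \<beta> (b j)" if "j < m" "j \<notin> I" for j
    proof -
      have "{Neg (b j)} \<in> ?G \<union> set ds" using that negs by blast
      then have "\<exists>l\<in>{Neg (b j)}. lit_val \<beta> l" using bm unfolding models_def by blast
      then show ?thesis by simp
    qed
    have "cost_assign b m \<beta> = (\<Sum>i<m. (if i \<in> I then 1 else 0::nat))"
      unfolding cost_assign_def using bI[OF bm] nb by (intro sum.cong) auto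
    also have "\<dots> = card ({..<m} \<inter> I)" by (simp add: sum.If_cases)
    also have "\<dots> = card I" using I by (simp add: Int_absorb1)
    finally have c: "cost_assign b m \<beta> = card I" .
    have "models \<beta> ?G" using bm unfolding models_def by blast
    then have "cost_cnf b m ?G \<le> enat (card I)"
      unfolding cost_cnf_def c[symmetric]
      using INF_lower[of \<beta> "{\<alpha>. models \<alpha> ?G}" "\<lambda>\<alpha>. enat (cost_assign b m \<alpha>)"] by simp
    then show ?thesis using part1 by simp
  qed
  show ?thesis using part1 part2 by blast
qed

end
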